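(* Let $\mathcal{M}$ be a matroid with set of bases $\mathcal{B}$ and let $d\geq 2$. If $\mathcal{M}$ has a minor $\mathcal{M}'$ isomorphic to the uniform matroid $\mathcal{U}_{d,2d}$, then there exist $B_1,B_2\in\mathcal{B}$ such that $\Delta_{\{B_1,B_2\}}=\binom{2d-1}{d}$.
   Context: $\mathcal{U}_{r,n}$ denotes the uniform matroid of rank $r$ on $n$ elements. A minor of $\mathcal{M}$ is a matroid $(\mathcal{M}\setminus A)/C$ with $A,C$ disjoint subsets of the ground set. For bases $B_1,B_2$ of $\mathcal{M}$, $\Delta_{\{B_1,B_2\}}$ is the number of unordered pairs $\{D_1,D_2\}$ with $D_1,D_2\in\mathcal{B}$ such that $D_1\cup D_2=B_1\cup B_2$ as multisets. *)

theory Defs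
  imports Main "HOL-Library.Multiset"
begin

definition matroid :: "'a set \<Rightarrow> 'a set set \<Rightarrow> bool" where
  "matroid E BB \<longleftrightarrow> finite E \<and> BB \<noteq> {} \<and> (\<forall>B\<in>BB. B \<subseteq> E) \<and>
     (\<forall>B1\<in>BB. \<forall>B2\<in>BB. \<forall>x\<in>B1 - B2. \<exists>y\<in>B2 - B1. insert y (B1 - {x}) \<in> BB)"

definition indep :: "'a set set \<Rightarrow> 'a set \<Rightarrow> bool" where
  "indep BB X \<longleftrightarrow> (\<exists>B\<in>BB. X \<subseteq> B)"

definition restrict_bases :: "'a set set \<Rightarrow> 'a set \<Rightarrow> 'a set set" where
  "restrict_bases BB S = {X. X \<subseteq> S \<and> indep BB X \<and> (\<forall>Y. X \<subset> Y \<and> Y \<subseteq> S \<longrightarrow> \<not> indep BB Y)}"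

definition delete_bases :: "'a set \<Rightarrow> 'a set set \<Rightarrow> 'a set \<Rightarrow> 'a set set" where
  "delete_bases E BB A = restrict_bases BB (E - A)"

definition contract_bases :: "'a set set \<Rightarrow> 'a set \<Rightarrow> 'a set set" where
  "contract_bases BB C = {B - C | B. B \<in> BB \<and> B \<inter> C \<in> restrict_bases BB C}"

text \<open>Bases of the minor (M \ A) / C; its ground set is E - A - C.\<close>
definition minor_bases :: "'a set \<Rightarrow> 'a set set \<Rightarrow> 'a set \<Rightarrow> 'a set \<Rightarrow> 'a set set" where
  "minor_bases E BB A C = contract_bases (delete_bases E BB A) C"

definition uniform_bases :: "nat \<Rightarrow> nat \<Rightarrow> nat set set" where
  "uniform_bases r n = {X. X \<subseteq> {0..<n} \<and> card X = r}"

definition matroid_iso :: "'a set \<Rightarrow> 'a set set \<Rightarrow> 'b set \<Rightarrow> 'b set set \<Rightarrow> bool" where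
  "matroid_iso E BB E' BB' \<longleftrightarrow>
     (\<exists>f. bij_betw f E E' \<and> (\<forall>X. X \<subseteq> E \<longrightarrow> (X \<in> BB \<longleftrightarrow> f ` X \<in> BB')))"

definition Delta :: "'a set set \<Rightarrow> 'a set \<Rightarrow> 'a set \<Rightarrow> nat" where
  "Delta BB B1 B2 = card {{#D1, D2#} | D1 D2. D1 \<in> BB \<and> D2 \<in> BB \<and>
       mset_set D1 + mset_set D2 = mset_set B1 + mset_set B2}"

end

theory Submission
  imports Defs
begin

lemma m_fin: "matroid E BB \<Longrightarrow> finite E" by (simp add: matroid_def)
lemma m_sub: "matroid E BB \<Longrightarrow> B \<in> BB \<Longrightarrow> B \<subseteq> E" by (auto simp: matroid_def)
lemma m_exch: "matroid E BB \<Longrightarrow> B1 \<in> BB \<Longrightarrow> B2 \<in> BB \<Longrightarrow> x \<in> B1 - B2 \<Longrightarrow>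
   \<exists>y\<in>B2 - B1. insert y (B1 - {x}) \<in> BB" by (simp add: matroid_def)
lemma m_bfin: "matroid E BB \<Longrightarrow> B \<in> BB \<Longrightarrow> finite B"
  using m_fin m_sub finite_subset by metis
lemma indep_sub: "matroid E BB \<Longrightarrow> indep BB X \<Longrightarrow> X \<subseteq> E"
  by (auto simp: indep_def matroid_def)
lemma indep_fin: "matroid E BB \<Longrightarrow> indep BB X \<Longrightarrow> finite X"
  using indep_sub m_fin finite_subset by metis
lemma indep_mono: "indep BB X \<Longrightarrow> Y \<subseteq> X \<Longrightarrow> indep BB Y" by (auto simp: indep_def)
lemma basis_indep: "B \<in> BB \<Longrightarrow> indep BB B" by (auto simp: indep_def)

lemma bases_card_le_aux:
  assumes M: "matroid E BB"
  shows "\<forall>B1 B2. B1 \<in> BB \<longrightarrow> B2 \<in> BB \<longrightarrow> card (B2 - B1) = n \<longrightarrow> card B2 \<le> card B1"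
proof (induction n)
  case 0
  show ?case
  proof (intro allI impI)
    fix B1 B2 assume h: "B1 \<in> BB" "B2 \<in> BB" "card (B2 - B1) = 0"
    have f: "finite B1" "finite B2" using h M m_bfin by blast+
    then have "B2 \<subseteq> B1" using h by auto
    then show "card B2 \<le> card B1" using f card_mono by blast
  qed
next
  case (Suc n)
  show ?case
  proof (intro allI impI)
    fix B1 B2 assume h: "B1 \<in> BB" "B2 \<in> BB" "card (B2 - B1) = Suc n"
    have f: "finite B1" "finite B2" using h M m_bfin by blast+
    have "B2 - B1 \<noteq> {}" using h(3) by (metis card.empty nat.distinct(1))
    then obtain x where x: "x \<in> B2 - B1" by blast
    obtain y where y: "y \<in> B1 - B2" "insert y (B2 - {x}) \<in> BB" using m_exch[OF M h(2) h(1) x] by blast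
    let ?B = "insert y (B2 - {x})"
    have "?B - B1 = (B2 - B1) - {x}" using x y by auto
    hence "card (?B - B1) = n" using h(3) x f by simp
    hence "card ?B \<le> card B1" using Suc.IH h(1) y(2) by blast
    moreover have "card B2 > 0" using x f card_gt_0_iff by blast
    moreover have "card ?B = card B2" using x y f calculation(2) by (simp add: card_insert_if)
    ultimately show "card B2 \<le> card B1" by simp
  qed
qed

lemma bases_card_eq:
  assumes M: "matroid E BB" and h: "B1 \<in> BB" "B2 \<in> BB"
  shows "card B1 = card B2"
proof -
  have "card B2 \<le> card B1" using bases_card_le_aux[OF M, of "card (B2 - B1)"] h by blast
  moreover have "card B1 \<le> card B2" using bases_card_le_aux[OF M, of "card (B1 - B2)"] h by blast
  ultimately show ?thesis by simp
qed

lemma stage1_aux: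
  assumes M: "matroid E BB" and B1: "B1 \<in> BB"
  shows "\<forall>B2. B2 \<in> BB \<longrightarrow> I \<subseteq> B2 \<longrightarrow> card (B2 - (I \<union> B1)) = n \<longrightarrow> (\<exists>B. B \<in> BB \<and> I \<subseteq> B \<and> B - B1 \<subseteq> I)"
proof (induction n)
  case 0
  show ?case
  proof (intro allI impI)
    fix B2 assume h: "B2 \<in> BB" "I \<subseteq> B2" "card (B2 - (I \<union> B1)) = 0"
    have f: "finite B2" using h M m_bfin by blast
    then have "B2 - B1 \<subseteq> I" using h by auto
    then show "\<exists>B. B \<in> BB \<and> I \<subseteq> B \<and> B - B1 \<subseteq> I" using h by blast
  qed
next
  case (Suc n)
  show ?case
  proof (intro allI impI)
    fix B2 assume h: "B2 \<in> BB" "I \<subseteq> B2" "card (B2 - (I \<union> B1)) = Suc n"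
    have f: "finite B2" using h M m_bfin by blast
    have "B2 - (I \<union> B1) \<noteq> {}" using h(3) by (metis card.empty nat.distinct(1))
    then obtain x where x: "x \<in> B2 - (I \<union> B1)" by blast
    obtain y where y: "y \<in> B1 - B2" "insert y (B2 - {x}) \<in> BB" using m_exch[OF M h(1) B1] x by blast
    let ?B = "insert y (B2 - {x})"
    have "?B - (I \<union> B1) = (B2 - (I \<union> B1)) - {x}" using x y by auto
    hence "card (?B - (I \<union> B1)) = n" using h(3) x f by simp
    moreover have "I \<subseteq> ?B" using h(2) x by blast
    ultimately show "\<exists>B. B \<in> BB \<and> I \<subseteq> B \<and> B - B1 \<subseteq> I" using Suc.IH y(2) by blast
  qed
qed

lemma augment:
  assumes M: "matroid E BB" and I1: "indep BB I1" and I2: "indep BB I2" and c: "card I1 < card I2"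
  shows "\<exists>x\<in>I2 - I1. indep BB (insert x I1)"
proof (rule ccontr)
  assume H: "\<not> ?thesis"
  obtain B1 where B1: "B1 \<in> BB" "I1 \<subseteq> B1" using I1 unfolding indep_def by auto
  obtain B0 where "B0 \<in> BB" "I2 \<subseteq> B0" using I2 unfolding indep_def by auto
  then obtain B2 where B2: "B2 \<in> BB" "I2 \<subseteq> B2" "B2 - B1 \<subseteq> I2" using stage1_aux[OF M B1(1)] by blast
  have fin1: "finite B1" by (rule m_bfin[OF M B1(1)])
  have fin2: "finite B2" by (rule m_bfin[OF M B2(1)])
  have fin3: "finite I1" by (rule indep_fin[OF M I1])
  have fin4: "finite I2" by (rule indep_fin[OF M I2])
  have d1: "B1 - B2 \<subseteq> I1"
  proof
    fix x assume x: "x \<in> B1 - B2"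
    show "x \<in> I1"
    proof (rule ccontr)
      assume nx: "x \<notin> I1"
      obtain y where y: "y \<in> B2 - B1" "insert y (B1 - {x}) \<in> BB" using m_exch[OF M B1(1) B2(1) x] by blast
      have "y \<in> I2 - I1" using y(1) B2(3) B1(2) by auto
      moreover have "insert y I1 \<subseteq> insert y (B1 - {x})" using B1(2) nx by auto
      hence "indep BB (insert y I1)" unfolding indep_def using y(2) by auto
      ultimately show False using H by auto
    qed
  qed
  have d2: "I2 - I1 \<subseteq> B2 - B1"
  proof
    fix y assume y: "y \<in> I2 - I1"
    have "y \<notin> B1"
    proof
      assume "y \<in> B1"
      then have "insert y I1 \<subseteq> B1" using B1(2) by auto
      then have "indep BB (insert y I1)" using B1(1) unfolding indep_def by auto
      thus False using H y by auto
    qed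
    thus "y \<in> B2 - B1" using y B2(2) by auto
  qed
  have cb: "card B1 = card B2" using bases_card_eq[OF M B1(1) B2(1)] .
  have a1: "card B1 = card (B1 \<inter> B2) + card (B1 - B2)" using fin1 by (rule card_Int_Diff)
  have a2: "card B2 = card (B2 \<inter> B1) + card (B2 - B1)" using fin2 by (rule card_Int_Diff)
  have "B2 \<inter> B1 = B1 \<inter> B2" by auto
  hence e: "card (B1 - B2) = card (B2 - B1)" using a1 a2 cb by simp
  have "card (I2 - I1) \<le> card (B2 - B1)" using d2 fin2 by (intro card_mono) auto
  also have "\<dots> = card (B1 - B2)" using e by simp
  also have "\<dots> \<le> card (I1 - I2)" using d1 B2(2) fin3 by (intro card_mono) auto
  finally have le: "card (I2 - I1) \<le> card (I1 - I2)" .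
  have b1: "card I2 = card (I2 \<inter> I1) + card (I2 - I1)" using fin4 by (rule card_Int_Diff)
  have b2: "card I1 = card (I1 \<inter> I2) + card (I1 - I2)" using fin3 by (rule card_Int_Diff)
  have "I2 \<inter> I1 = I1 \<inter> I2" by auto
  hence "card I2 \<le> card I1" using b1 b2 le by simp
  thus False using c by simp
qed

lemma grow:
  assumes M: "matroid E BB" and Y: "indep BB Y"
  shows "indep BB J \<Longrightarrow> \<exists>L. indep BB L \<and> J \<subseteq> L \<and> L \<subseteq> J \<union> Y \<and> card Y \<le> card L"
proof (induction "card Y - card J" arbitrary: J rule: less_induct)
  case less
  show ?case
  proof (cases "card Y \<le> card J")
    case True thus ?thesis using less.prems by blast
  next
    case False
    then have "card J < card Y" by simp
    then obtain x where x: "x \<in> Y - J" "indep BB (insert x J)" using augment[OF M less.prems Y] by blast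
    have "finite J" using less.prems M indep_fin by blast
    hence "card (insert x J) = Suc (card J)" using x by simp
    hence "card Y - card (insert x J) < card Y - card J" using False by simp
    from less.hyps[OF this x(2)] obtain L where L: "indep BB L" "insert x J \<subseteq> L" "L \<subseteq> insert x J \<union> Y" "card Y \<le> card L"
      by blast
    have "J \<subseteq> L" "L \<subseteq> J \<union> Y" using L(2,3) x(1) by auto
    then show ?thesis using L(1,4) by blast
  qed
qed

lemma ex_max:
  assumes M: "matroid E BB" and S: "finite S"
  shows "indep BB Y \<Longrightarrow> Y \<subseteq> S \<Longrightarrow> \<exists>X. Y \<subseteq> X \<and> X \<in> restrict_bases BB S"
proof (induction "card S - card Y" arbitrary: Y rule: less_induct)
  case less
  show ?case
  proof (cases "\<forall>Z. Y \<subset> Z \<and> Z \<subseteq> S \<longrightarrow> \<not> indep BB Z")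
    case True thus ?thesis using less.prems unfolding restrict_bases_def by blast
  next
    case False
    then obtain Z where Z: "Y \<subset> Z" "Z \<subseteq> S" "indep BB Z" by blast
    have fZ: "finite Z" using Z(2) S by (rule finite_subset)
    have "card Y < card Z" using psubset_card_mono[OF fZ Z(1)] .
    moreover have "card Z \<le> card S" using card_mono[OF S Z(2)] .
    ultimately have "card S - card Z < card S - card Y" by linarith
    from less.hyps[OF this Z(3) Z(2)] obtain X where "Z \<subseteq> X" "X \<in> restrict_bases BB S" by blast
    thus ?thesis using Z by blast
  qed
qed

lemma rb_card:
  assumes M: "matroid E BB" and X: "X \<in> restrict_bases BB S" and Y: "Y \<subseteq> S" "indep BB Y"
  shows "card Y \<le> card X"
proof (rule ccontr)
  assume nc: "\<not> ?thesis"
  have XS: "X \<subseteq> S" "indep BB X" "\<forall>Z. X \<subset> Z \<and> Z \<subseteq> S \<longrightarrow> \<not> indep BB Z"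
    using X unfolding restrict_bases_def by auto
  obtain x where "x \<in> Y - X" "indep BB (insert x X)" using augment[OF M XS(2) Y(2)] nc by auto
  then show False using XS Y by blast
qed

lemma rb_intro:
  assumes M: "matroid E BB" and "X \<subseteq> S" "indep BB X" "\<forall>Y. Y \<subseteq> S \<longrightarrow> indep BB Y \<longrightarrow> card Y \<le> card X"
  shows "X \<in> restrict_bases BB S"
  unfolding restrict_bases_def
proof (intro CollectI conjI allI impI)
  show "X \<subseteq> S" "indep BB X" using assms by auto
  fix Y assume Y: "X \<subset> Y \<and> Y \<subseteq> S"
  show "\<not> indep BB Y"
  proof
    assume iY: "indep BB Y"
    hence "finite Y" using indep_fin[OF M] by blast
    hence "card X < card Y" using Y psubset_card_mono by blast
    moreover have "card Y \<le> card X" using assms(4) Y iY by blast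
    ultimately show False by simp
  qed
qed

lemma indep_del:
  assumes M: "matroid E BB" and S: "finite S"
  shows "indep (restrict_bases BB S) Y \<longleftrightarrow> indep BB Y \<and> Y \<subseteq> S"
proof
  assume "indep (restrict_bases BB S) Y"
  then obtain X where X: "X \<in> restrict_bases BB S" "Y \<subseteq> X" unfolding indep_def by blast
  then have "X \<subseteq> S" "indep BB X" unfolding restrict_bases_def by auto
  then show "indep BB Y \<and> Y \<subseteq> S" using indep_mono X(2) by blast
next
  assume h: "indep BB Y \<and> Y \<subseteq> S"
  obtain X where "Y \<subseteq> X" "X \<in> restrict_bases BB S" using ex_max[OF M S] h by blast
  then show "indep (restrict_bases BB S) Y" unfolding indep_def by blast
qed

lemma rb_rb:
  assumes M: "matroid E BB" and S: "finite S" and C: "C \<subseteq> S"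
  shows "restrict_bases (restrict_bases BB S) C = restrict_bases BB C"
proof -
  have eq: "indep (restrict_bases BB S) Y \<longleftrightarrow> indep BB Y" if "Y \<subseteq> C" for Y
    using indep_del[OF M S, of Y] that C by blast
  show ?thesis
  proof (rule set_eqI)
    fix X
    show "X \<in> restrict_bases (restrict_bases BB S) C \<longleftrightarrow> X \<in> restrict_bases BB C"
    proof
      assume "X \<in> restrict_bases (restrict_bases BB S) C"
      then have h: "X \<subseteq> C" "indep (restrict_bases BB S) X"
          "\<forall>Y. X \<subset> Y \<and> Y \<subseteq> C \<longrightarrow> \<not> indep (restrict_bases BB S) Y"
        unfolding restrict_bases_def[of "restrict_bases BB S" C] by auto
      have "indep BB X" using eq h(1,2) by blast
      moreover have "\<forall>Y. X \<subset> Y \<and> Y \<subseteq> C \<longrightarrow> \<not> indep BB Y" using eq h(3) by blast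
      ultimately show "X \<in> restrict_bases BB C" using h(1) unfolding restrict_bases_def[of BB C] by blast
    next
      assume "X \<in> restrict_bases BB C"
      then have h: "X \<subseteq> C" "indep BB X" "\<forall>Y. X \<subset> Y \<and> Y \<subseteq> C \<longrightarrow> \<not> indep BB Y"
        unfolding restrict_bases_def[of BB C] by auto
      have "indep (restrict_bases BB S) X" using eq h(1,2) by blast
      moreover have "\<forall>Y. X \<subset> Y \<and> Y \<subseteq> C \<longrightarrow> \<not> indep (restrict_bases BB S) Y" using eq h(3) by blast
      ultimately show "X \<in> restrict_bases (restrict_bases BB S) C"
        using h(1) unfolding restrict_bases_def[of "restrict_bases BB S" C] by blast
    qed
  qed
qed

lemma pair_mset_eq:
  assumes "{#a, b#} = {#c, d#}"
  shows "(a = c \<and> b = d) \<or> (a = d \<and> b = c)"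
  using assms by (auto simp: add_eq_conv_ex)

lemma mset_pair:
  assumes "finite S" "finite G" "S \<inter> G = {}" "P \<subseteq> G"
  shows "mset_set (S \<union> P) + mset_set (S \<union> (G - P)) = mset_set S + mset_set S + mset_set G"
proof -
  have fP: "finite P" "finite (G - P)" using assms finite_subset by auto
  have "mset_set (S \<union> P) = mset_set S + mset_set P"
    using assms fP by (intro mset_set_Union) auto
  moreover have "mset_set (S \<union> (G - P)) = mset_set S + mset_set (G - P)"
    using assms fP by (intro mset_set_Union) auto
  moreover have "mset_set G = mset_set P + mset_set (G - P)"
    using mset_set_Union[of P "G - P"] fP assms(4) by (simp add: Un_absorb1)
  ultimately show ?thesis by (simp add: ac_simps)
qed

theorem proposition3p3:
  fixes E :: "'a set" and BB :: "'a set set" and d :: nat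
  assumes "matroid E BB"
    and "d \<ge> 2"
    and "\<exists>A C. A \<subseteq> E \<and> C \<subseteq> E \<and> A \<inter> C = {} \<and>
           matroid_iso (E - A - C) (minor_bases E BB A C) {0..<2*d} (uniform_bases d (2*d))"
  shows "\<exists>B1\<in>BB. \<exists>B2\<in>BB. Delta BB B1 B2 = (2*d - 1) choose d"
proof -
  note M = assms(1)
  have finE: "finite E" using M m_fin by blast
  obtain A C where AC: "A \<subseteq> E" "C \<subseteq> E" "A \<inter> C = {}"
    and iso: "matroid_iso (E - A - C) (minor_bases E BB A C) {0..<2*d} (uniform_bases d (2*d))"
    using assms(3) by blast
  define G where "G = E - A - C"
  define B' where "B' = restrict_bases BB (E - A)"
  define MB where "MB = minor_bases E BB A C"
  have iso2: "matroid_iso G MB {0..<2*d} (uniform_bases d (2*d))" using iso G_def MB_def by simp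
  obtain f where f: "bij_betw f G {0..<2*d}" "\<forall>X. X \<subseteq> G \<longrightarrow> (X \<in> MB \<longleftrightarrow> f ` X \<in> uniform_bases d (2*d))"
    using iso2 unfolding matroid_iso_def by blast
  have finG: "finite G" using finE G_def by auto
  have cardG: "card G = 2*d" using bij_betw_same_card[OF f(1)] by simp
  have MBc: "X \<in> MB \<longleftrightarrow> card X = d" if X: "X \<subseteq> G" for X
  proof -
    have inj: "inj_on f X" using bij_betw_imp_inj_on[OF f(1)] X by (rule inj_on_subset)
    have "f ` X \<subseteq> f ` G" using X by (rule image_mono)
    hence "f ` X \<subseteq> {0..<2*d}" using bij_betw_imp_surj_on[OF f(1)] by simp
    hence "f ` X \<in> uniform_bases d (2*d) \<longleftrightarrow> card (f ` X) = d" unfolding uniform_bases_def by simp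
    moreover have "card (f ` X) = card X" by (rule card_image[OF inj])
    ultimately show "X \<in> MB \<longleftrightarrow> card X = d" using f(2) X by simp
  qed
  have CEA: "C \<subseteq> E - A" using AC by blast
  have MBdef: "MB = {X - C | X. X \<in> B' \<and> X \<inter> C \<in> restrict_bases BB C}"
  proof -
    have fEA: "finite (E - A)" using finE by simp
    have rr: "restrict_bases B' C = restrict_bases BB C" unfolding B'_def using rb_rb[OF M fEA CEA] .
    show ?thesis unfolding MB_def minor_bases_def contract_bases_def delete_bases_def B'_def[symmetric] rr ..
  qed
  obtain P0 where P0: "P0 \<subseteq> G" "card P0 = d" using obtain_subset_with_card_n[of d G] cardG by auto
  have "P0 \<in> MB" using MBc P0 by blast
  hence "P0 \<in> {X - C | X. X \<in> B' \<and> X \<inter> C \<in> restrict_bases BB C}" by (simp only: MBdef)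
  then obtain X0 where X0: "P0 = X0 - C" "X0 \<in> B'" "X0 \<inter> C \<in> restrict_bases BB C" by blast
  define I where "I = X0 \<inter> C"
  have Irb: "I \<in> restrict_bases BB C" using X0(3) I_def by simp
  have I: "I \<subseteq> C" "indep BB I" "\<forall>Y. I \<subset> Y \<and> Y \<subseteq> C \<longrightarrow> \<not> indep BB Y"
    using Irb unfolding restrict_bases_def by auto
  have claim1: "I \<union> P \<in> B'" if P: "P \<subseteq> G" "card P = d" for P
  proof -
    have "P \<in> MB" using MBc P by blast
    hence "P \<in> {X - C | X. X \<in> B' \<and> X \<inter> C \<in> restrict_bases BB C}" by (simp only: MBdef)
    then obtain X where X: "P = X - C" "X \<in> B'" "X \<inter> C \<in> restrict_bases BB C" by blast
    have Xr: "X \<subseteq> E - A" "indep BB X" using X(2) unfolding B'_def restrict_bases_def by auto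
    have XC1: "X \<inter> C \<subseteq> C" by blast
    have XC2: "indep BB (X \<inter> C)" using indep_mono[OF Xr(2), of "X \<inter> C"] by blast
    note XC = XC1 XC2
    have cI: "card (X \<inter> C) = card I"
      using rb_card[OF M X(3) I(1) I(2)] rb_card[OF M Irb XC] by simp
    obtain L where L: "indep BB L" "I \<subseteq> L" "L \<subseteq> I \<union> X" "card X \<le> card L"
      using grow[OF M Xr(2) I(2)] by blast
    have LIP: "L \<subseteq> I \<union> P"
    proof
      fix z assume z: "z \<in> L"
      show "z \<in> I \<union> P"
      proof (cases "z \<in> C")
        case True
        have "indep BB (insert z I)" using indep_mono[OF L(1)] L(2) z by blast
        moreover have "insert z I \<subseteq> C" using True I(1) by blast
        ultimately have "z \<in> I" using I(3) by blast
        thus ?thesis by blast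
      next
        case False thus ?thesis using z L(3) X(1) by blast
      qed
    qed
    have "X \<subseteq> E" using Xr(1) by blast
    hence finX: "finite X" using finE by (rule finite_subset)
    have "card (I \<union> P) \<le> card I + card P" by (rule card_Un_le)
    also have "\<dots> = card (X \<inter> C) + card (X - C)" using cI X(1) by simp
    also have "\<dots> = card X" using finX card_Int_Diff[of X C] by simp
    finally have le: "card (I \<union> P) \<le> card L" using L(4) by linarith
    have "I \<union> P \<subseteq> E" using I(1) AC(2) P(1) unfolding G_def by blast
    hence finIP: "finite (I \<union> P)" using finE by (rule finite_subset)
    have LE: "L = I \<union> P" using card_seteq[OF finIP LIP le] .
    show "I \<union> P \<in> B'" unfolding B'_def
    proof (rule rb_intro[OF M])
      show "I \<union> P \<subseteq> E - A" using I(1) CEA P(1) unfolding G_def by blast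
      show "indep BB (I \<union> P)" using L(1) LE by simp
      show "\<forall>Y. Y \<subseteq> E - A \<longrightarrow> indep BB Y \<longrightarrow> card Y \<le> card (I \<union> P)"
      proof (intro allI impI)
        fix Y assume "Y \<subseteq> E - A" "indep BB Y"
        then have "card Y \<le> card X" by (rule rb_card[OF M X(2)[unfolded B'_def]])
        then show "card Y \<le> card (I \<union> P)" using L(4) LE by simp
      qed
    qed
  qed
  have J0: "I \<union> P0 \<in> B'" using claim1 P0 by blast
  then have J0r: "I \<union> P0 \<subseteq> E - A" "indep BB (I \<union> P0)" "\<forall>Y. I \<union> P0 \<subset> Y \<and> Y \<subseteq> E - A \<longrightarrow> \<not> indep BB Y"
    unfolding B'_def restrict_bases_def by auto
  obtain B0 where B0: "B0 \<in> BB" "I \<union> P0 \<subseteq> B0" using J0r(2) unfolding indep_def by blast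
  define K where "K = B0 - (I \<union> P0)"
  have KA: "K \<subseteq> A"
  proof
    fix z assume z: "z \<in> K"
    have "B0 \<subseteq> E" by (rule m_sub[OF M B0(1)])
    hence zE: "z \<in> E" using z unfolding K_def by blast
    show "z \<in> A"
    proof (rule ccontr)
      assume "z \<notin> A"
      then have "insert z (I \<union> P0) \<subseteq> E - A" using zE J0r by blast
      moreover have "insert z (I \<union> P0) \<subseteq> B0" using B0(2) z unfolding K_def by blast
      hence "indep BB (insert z (I \<union> P0))" unfolding indep_def using B0(1) by blast
      moreover have "I \<union> P0 \<subset> insert z (I \<union> P0)" using z unfolding K_def by blast
      ultimately show False using J0r(3) by blast
    qed
  qed
  have finB0: "finite B0" using M B0(1) m_bfin by blast
  have claim2: "J \<union> K \<in> BB" if J: "J \<in> B'" for J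
  proof -
    have Jr: "J \<subseteq> E - A" "indep BB J" "\<forall>Y. J \<subset> Y \<and> Y \<subseteq> E - A \<longrightarrow> \<not> indep BB Y"
      using J unfolding B'_def restrict_bases_def by auto
    obtain L where L: "indep BB L" "J \<subseteq> L" "L \<subseteq> J \<union> B0" "card B0 \<le> card L"
      using grow[OF M basis_indep[OF B0(1)] Jr(2)] by blast
    have LJK: "L \<subseteq> J \<union> K"
    proof
      fix z assume z: "z \<in> L"
      show "z \<in> J \<union> K"
      proof (cases "z \<in> J")
        case True then show ?thesis by blast
      next
        case False
        have zB: "z \<in> B0" using z L(3) False by blast
        have "z \<notin> E - A"
        proof
          assume "z \<in> E - A"
          then have "J \<subset> insert z J" "insert z J \<subseteq> E - A" using False Jr(1) by auto
          moreover have "indep BB (insert z J)" using indep_mono[OF L(1)] z L(2) by blast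
          ultimately show False using Jr(3) by blast
        qed
        then have "z \<notin> I \<union> P0" using J0r(1) by blast
        thus ?thesis using zB unfolding K_def by blast
      qed
    qed
    have cJ: "card J = card (I \<union> P0)"
      using rb_card[OF M J[unfolded B'_def] J0r(1) J0r(2)] rb_card[OF M J0[unfolded B'_def] Jr(1) Jr(2)] by simp
    have "card (J \<union> K) \<le> card J + card K" by (rule card_Un_le)
    also have "\<dots> = card (I \<union> P0) + card (B0 - (I \<union> P0))" using cJ K_def by simp
    also have "\<dots> = card B0"
    proof -
      have fJ0: "finite (I \<union> P0)" using B0(2) finB0 by (rule finite_subset)
      have "card (B0 - (I \<union> P0)) = card B0 - card (I \<union> P0)" by (rule card_Diff_subset[OF fJ0 B0(2)])
      moreover have "card (I \<union> P0) \<le> card B0" by (rule card_mono[OF finB0 B0(2)])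
      ultimately show ?thesis by simp
    qed
    finally have le: "card (J \<union> K) \<le> card L" using L(4) by linarith
    have "B0 \<subseteq> E" by (rule m_sub[OF M B0(1)])
    hence "J \<union> K \<subseteq> E" using Jr(1) unfolding K_def by blast
    hence fin: "finite (J \<union> K)" using finE by (rule finite_subset)
    have LE: "L = J \<union> K" using card_seteq[OF fin LJK le] .
    obtain B where B: "B \<in> BB" "L \<subseteq> B" using L(1) unfolding indep_def by blast
    have "card B = card B0" using bases_card_eq[OF M B(1) B0(1)] .
    hence "L = B" using card_seteq[OF m_bfin[OF M B(1)] B(2)] L(4) by simp
    thus "J \<union> K \<in> BB" using LE B by simp
  qed
  define S where "S = I \<union> K"
  have SG: "S \<inter> G = {}" using I(1) KA unfolding G_def S_def by blast
  have "S \<subseteq> E" using I(1) AC(2) KA AC(1) unfolding S_def by blast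
  hence finS: "finite S" using finE by (rule finite_subset)
  have SP: "S \<union> P \<in> BB" if "P \<subseteq> G" "card P = d" for P
  proof -
    have "(I \<union> P) \<union> K \<in> BB" using claim2 claim1 that by blast
    moreover have "(I \<union> P) \<union> K = S \<union> P" unfolding S_def by blast
    ultimately show ?thesis by simp
  qed
  have B0S: "S \<union> P0 \<in> BB" using SP P0 by blast
  have cardD: "card D = card S + d" if "D \<in> BB" for D
  proof -
    have "card D = card (S \<union> P0)" using bases_card_eq[OF M that B0S] .
    also have "\<dots> = card S + card P0"
    proof (rule card_Un_disjoint[OF finS])
      show "finite P0" using P0(1) finG by (rule finite_subset)
      show "S \<inter> P0 = {}" using SG P0(1) by blast
    qed
    finally show ?thesis using P0 by simp
  qed
  have "G \<noteq> {}" using cardG assms(2) by auto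
  then obtain g0 where g0: "g0 \<in> G" by blast
  define Q where "Q = G - P0"
  have fP0: "finite P0" using P0(1) finG by (rule finite_subset)
  have Q: "Q \<subseteq> G" "card Q = d" unfolding Q_def using card_Diff_subset[OF fP0 P0(1)] P0(2) cardG by auto
  define B1 where "B1 = S \<union> P0"
  define B2 where "B2 = S \<union> Q"
  have B12: "B1 \<in> BB" "B2 \<in> BB" unfolding B1_def B2_def using SP P0 Q by auto
  have RHS: "mset_set B1 + mset_set B2 = mset_set S + mset_set S + mset_set G"
    unfolding B1_def B2_def Q_def using mset_pair[OF finS finG SG P0(1)] .
  define fam where "fam = {P. P \<subseteq> G \<and> card P = d \<and> g0 \<in> P}"
  define h where "h = (\<lambda>P. {#S \<union> P, S \<union> (G - P)#})"
  have key: "{{#D1, D2#} | D1 D2. D1 \<in> BB \<and> D2 \<in> BB \<and> mset_set D1 + mset_set D2 = mset_set B1 + mset_set B2}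
     = h ` fam" (is "?L = _")
  proof
    show "h ` fam \<subseteq> ?L"
    proof
      fix m assume "m \<in> h ` fam"
      then obtain P where P: "P \<subseteq> G" "card P = d" "g0 \<in> P" "m = h P" unfolding fam_def by blast
      have fP: "finite P" using P(1) finG by (rule finite_subset)
      have "card (G - P) = d" using card_Diff_subset[OF fP P(1)] P(2) cardG by auto
      hence "S \<union> (G - P) \<in> BB" using SP by blast
      moreover have "S \<union> P \<in> BB" using SP P by blast
      moreover have "mset_set (S \<union> P) + mset_set (S \<union> (G - P)) = mset_set B1 + mset_set B2"
        using RHS mset_pair[OF finS finG SG P(1)] by simp
      ultimately show "m \<in> ?L" using P(4) unfolding h_def by blast
    qed
  next
    show "?L \<subseteq> h ` fam"
    proof
      fix m assume "m \<in> ?L"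
      then obtain D1 D2 where D: "m = {#D1, D2#}" "D1 \<in> BB" "D2 \<in> BB"
        "mset_set D1 + mset_set D2 = mset_set S + mset_set S + mset_set G" using RHS by auto
      have fD: "finite D1" "finite D2" using D M m_bfin by blast+
      have cnt: "(if x \<in> D1 then 1 else 0) + (if x \<in> D2 then 1 else (0::nat)) =
          (if x \<in> S then 2 else 0) + (if x \<in> G then 1 else 0)" for x
      proof -
        have "count (mset_set D1 + mset_set D2) x = count (mset_set S + mset_set S + mset_set G) x"
          using D(4) by simp
        thus ?thesis using fD finS finG by (simp add: count_mset_set')
      qed
      have e1: "x \<in> S \<Longrightarrow> x \<in> D1 \<and> x \<in> D2" for x using cnt[of x] SG by (auto split: if_splits)
      have e2: "x \<notin> S \<Longrightarrow> x \<notin> G \<Longrightarrow> x \<notin> D1 \<and> x \<notin> D2" for x using cnt[of x] by (auto split: if_splits)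
      have e3: "x \<in> G \<Longrightarrow> (x \<in> D1 \<longleftrightarrow> x \<notin> D2)" for x using cnt[of x] SG by (auto split: if_splits)
      define P where "P = D1 \<inter> G"
      have D1P: "D1 = S \<union> P" unfolding P_def using e1 e2 by blast
      have D2P: "D2 = S \<union> (G - P)" unfolding P_def using e1 e2 e3 SG by blast
      have PG: "P \<subseteq> G" unfolding P_def by blast
      have finP: "finite P" using PG finG by (rule finite_subset)
      have SPd: "S \<inter> P = {}" using SG PG by blast
      have "card D1 = card (S \<union> P)" by (simp only: D1P)
      also have "\<dots> = card S + card P" by (rule card_Un_disjoint[OF finS finP SPd])
      finally have "card D1 = card S + card P" .
      hence cP: "card P = d" using cardD[OF D(2)] by simp
      have cGP: "card (G - P) = d" using card_Diff_subset[OF finP PG] cardG cP by simp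
      show "m \<in> h ` fam"
      proof (cases "g0 \<in> P")
        case True
        then have "P \<in> fam" using PG cP unfolding fam_def by blast
        moreover have "m = h P" unfolding h_def D(1) by (simp only: D1P D2P)
        ultimately show ?thesis by blast
      next
        case False
        then have "G - P \<in> fam" using g0 cGP unfolding fam_def by blast
        moreover have "G - (G - P) = P" using PG by blast
        hence "h (G - P) = {#D2, D1#}" unfolding h_def by (simp only: D1P D2P)
        hence "m = h (G - P)" unfolding D(1) using add_mset_commute[of D2 D1 "{#}"] by simp
        ultimately show ?thesis by blast
      qed
    qed
  qed
  have inj: "inj_on h fam"
  proof
    fix P P' assume P: "P \<in> fam" "P' \<in> fam" "h P = h P'"
    have ex: "(S \<union> P \<inter> G) = (S \<union> P) \<inter> G \<union> S" by blast
    have PG: "P \<subseteq> G" "P' \<subseteq> G" "g0 \<in> P" "g0 \<in> P'" using P(1,2) unfolding fam_def by auto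
    from pair_mset_eq[OF P(3)[unfolded h_def]]
    show "P = P'"
    proof
      assume "S \<union> P = S \<union> P' \<and> S \<union> (G - P) = S \<union> (G - P')"
      then have "(S \<union> P) \<inter> G = (S \<union> P') \<inter> G" by simp
      thus "P = P'" using PG SG by blast
    next
      assume "S \<union> P = S \<union> (G - P') \<and> S \<union> (G - P) = S \<union> P'"
      then have "(S \<union> P) \<inter> G = (S \<union> (G - P')) \<inter> G" by simp
      hence "P = G - P'" using PG SG by blast
      thus "P = P'" using PG by blast
    qed
  qed
  define sub where "sub = {R. R \<subseteq> G - {g0} \<and> card R = d - 1}"
  have famsub: "fam = insert g0 ` sub"
  proof
    show "fam \<subseteq> insert g0 ` sub"
    proof
      fix P assume "P \<in> fam"
      then have P: "P \<subseteq> G" "card P = d" "g0 \<in> P" unfolding fam_def by auto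
      have "P - {g0} \<in> sub" using P unfolding sub_def by auto
      moreover have "P = insert g0 (P - {g0})" using P by blast
      ultimately show "P \<in> insert g0 ` sub" by blast
    qed
  next
    show "insert g0 ` sub \<subseteq> fam"
    proof
      fix P assume "P \<in> insert g0 ` sub"
      then obtain R where R: "R \<subseteq> G - {g0}" "card R = d - 1" "P = insert g0 R" unfolding sub_def by blast
      have "R \<subseteq> G" using R(1) by blast
      hence "finite R" using finG by (rule finite_subset)
      moreover have "g0 \<notin> R" using R(1) by blast
      ultimately have "card P = d" using R assms(2) by simp
      thus "P \<in> fam" using R g0 unfolding fam_def by blast
    qed
  qed
  have injI: "inj_on (insert g0) sub"
    unfolding sub_def inj_on_def by blast
  have "card (G - {g0}) = 2*d - 1" using cardG g0 finG by simp
  hence csub: "card sub = (2*d - 1) choose (d - 1)" using n_subsets[of "G - {g0}" "d - 1"] finG sub_def by simp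
  have cfam: "card (h ` fam) = (2*d - 1) choose (d - 1)"
    using card_image[OF inj] famsub card_image[OF injI] csub by simp
  have sym: "(2*d - 1) choose (d - 1) = (2*d - 1) choose d"
    using binomial_symmetric[of "d - 1" "2*d - 1"] assms(2) by (simp add: diff_diff_left)
  have "Delta BB B1 B2 = (2*d - 1) choose d"
    unfolding Delta_def using key cfam sym by simp
  thus ?thesis using B12 by blast
qed

end
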